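(* Assume $\alpha>\beta+1$, $\beta\ge0$, $\theta>0$, and $\alpha-\beta-1<\frac{4\theta}{\beta+1}$. Let $\rho\in\mathbb R$ and let $w$ be the solution on $[0,\infty)$ of $L(w)+e^{w}=0$, $w(0)=\rho$, $w'(0)=0$, and let $w^*(s)=\ln\{\theta^{\beta+1}(\alpha-\beta-1)\}-\theta\ln s$, $s>0$. Then for every $R>0$, $w-w^*$ has infinitely many zeros on $(R,+\infty)$ and only finitely many zeros on $(0,R]$. In particular $w-w^*$ has infinitely many zeros on $(0,\infty)$.
   Context: $L(u)(r)=r^{-\gamma}(r^{\alpha}|u'(r)|^{\beta}u'(r))'$ and $\theta=\gamma+2+\beta-\alpha$. The function $w^*$ is a singular solution of $L(w)+e^w=0$ on $(0,\infty)$. *)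

theory Defs
  imports "HOL-Analysis.Analysis"
begin

text \<open>The operator L(u)(r) = r^(-gamma) (r^alpha |u'(r)|^beta u'(r))'.\<close>

definition flux :: "real \<Rightarrow> real \<Rightarrow> (real \<Rightarrow> real) \<Rightarrow> real \<Rightarrow> real" where
  "flux \<alpha> \<beta> w' r = r powr \<alpha> * \<bar>w' r\<bar> powr \<beta> * w' r"

definition is_solution ::
  "real \<Rightarrow> real \<Rightarrow> real \<Rightarrow> real \<Rightarrow> (real \<Rightarrow> real) \<Rightarrow> bool" where
  "is_solution \<alpha> \<beta> \<gamma> \<rho> w \<longleftrightarrow>
     (\<exists>w'. (\<forall>r\<ge>0. (w has_real_derivative w' r) (at r within {0..}))
        \<and> continuous_on {0..} w'
        \<and> w 0 = \<rho> \<and> w' 0 = 0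
        \<and> (\<forall>r>0. (flux \<alpha> \<beta> w' has_real_derivative (- (r powr \<gamma> * exp (w r)))) (at r)))"

definition wstar :: "real \<Rightarrow> real \<Rightarrow> real \<Rightarrow> real \<Rightarrow> real" where
  "wstar \<alpha> \<beta> \<theta> s = ln (\<theta> powr (\<beta> + 1) * (\<alpha> - \<beta> - 1)) - \<theta> * ln s"

end

theory Submission
  imports Defs "HOL-Analysis.Analysis"
begin


lemma lip_from_deriv:
  fixes f f' :: "real \<Rightarrow> real"
  assumes d: "\<And>x. x \<ge> T \<Longrightarrow> DERIV f x :> f' x" and b: "\<And>x. x \<ge> T \<Longrightarrow> \<bar>f' x\<bar> \<le> K"
    and s: "s \<ge> T" and t: "t \<ge> T"
  shows "\<bar>f s - f t\<bar> \<le> K * \<bar>s - t\<bar>"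
proof -
  have *: "\<bar>f y - f x\<bar> \<le> K * \<bar>y - x\<bar>" if "T \<le> x" "x < y" for x y
  proof -
    have "\<And>u. x \<le> u \<Longrightarrow> u \<le> y \<Longrightarrow> DERIV f u :> f' u" using d that by auto
    from MVT2[OF \<open>x<y\<close> this] obtain z where z: "x < z" "z < y" "f y - f x = (y - x) * f' z"
      by blast
    have "\<bar>f' z\<bar> \<le> K" using b z that by auto
    then show ?thesis using z that by (simp add: abs_mult mult.commute mult_right_mono)
  qed
  consider "s < t" | "s = t" | "t < s" by linarith
  then show ?thesis
  proof cases
    case 1 then show ?thesis using *[OF s 1] by (simp add: abs_minus_commute)
  next
    case 2 then show ?thesis by simp
  next
    case 3 then show ?thesis using *[OF t 3] by simp
  qed
qed

lemma barbalat_A: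
  fixes g g' f :: "real \<Rightarrow> real"
  assumes d: "\<And>t. t \<ge> T \<Longrightarrow> DERIV g t :> g' t"
    and gf: "\<And>t. t \<ge> T \<Longrightarrow> g' t \<le> - f t"
    and fnn: "\<And>t. t \<ge> T \<Longrightarrow> f t \<ge> 0"
    and lip: "\<And>s t. s \<ge> T \<Longrightarrow> t \<ge> T \<Longrightarrow> \<bar>f s - f t\<bar> \<le> K * \<bar>s - t\<bar>"
    and lb: "\<And>t. t \<ge> T \<Longrightarrow> g t \<ge> B"
  shows "(f \<longlongrightarrow> 0) at_top"
proof (rule tendstoI)
  fix \<epsilon> :: real assume e: "\<epsilon> > 0"
  define K' where "K' = \<bar>K\<bar> + 1"
  have K': "K' > 0" "K \<le> K'" unfolding K'_def by auto
  define \<delta> where "\<delta> = \<epsilon> / (2 * K')"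
  have dpos: "\<delta> > 0" using e K' by (simp add: \<delta>_def)
  have mono: "g y \<le> g x" if "T \<le> x" "x \<le> y" for x y
    using DERIV_nonpos_imp_nonincreasing[of x y g] that d gf fnn
    by (metis order.trans neg_le_0_iff_le)
  define L where "L = Inf (g ` {T..})"
  have bdd: "bdd_below (g ` {T..})" using lb by (auto intro!: bdd_belowI2)
  have Lle: "L \<le> g t" if "t \<ge> T" for t
    unfolding L_def using bdd that by (auto intro!: cInf_lower)
  have "L < L + \<epsilon> * \<delta> / 2" using e dpos by simp
  then obtain t0 where t0: "t0 \<ge> T" "g t0 < L + \<epsilon> * \<delta> / 2"
    unfolding L_def using cInf_lessD[of "g ` {T..}"] by fastforce
  show "eventually (\<lambda>t. dist (f t) 0 < \<epsilon>) at_top"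
    unfolding eventually_at_top_linorder
  proof (rule exI[of _ t0], intro allI impI, rule ccontr)
    fix t assume tt: "t \<ge> t0" and nf: "\<not> dist (f t) 0 < \<epsilon>"
    have tT: "t \<ge> T" using tt t0 by simp
    have ft: "f t \<ge> \<epsilon>" using nf fnn[OF tT] by simp
    have dd: "\<And>u. t \<le> u \<Longrightarrow> u \<le> t+\<delta> \<Longrightarrow> DERIV g u :> g' u" using d tT by auto
    have lt: "t < t + \<delta>" using dpos by simp
    obtain z where z: "t < z" "z < t + \<delta>" "g (t + \<delta>) - g t = (t + \<delta> - t) * g' z"
      using MVT2[OF lt dd] by blast
    have "\<bar>f z - f t\<bar> \<le> K * \<bar>z - t\<bar>" using lip[of z t] z tT by auto
    also have "\<dots> \<le> K' * \<delta>" using z K' by (intro mult_mono) auto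
    also have "\<dots> = \<epsilon>/2" using K' by (simp add: \<delta>_def)
    finally have fz: "f z \<ge> \<epsilon>/2" using ft by linarith
    have "g' z \<le> - (\<epsilon>/2)" using gf[of z] fz z tT by simp
    hence "\<delta> * g' z \<le> \<delta> * (- (\<epsilon>/2))" using dpos by (intro mult_left_mono) auto
    hence "g (t + \<delta>) \<le> g t - \<epsilon> * \<delta> / 2" using z by (simp add: algebra_simps)
    moreover have "g t \<le> g t0" using mono t0 tt by simp
    moreover have "L \<le> g (t + \<delta>)" using Lle tT dpos by simp
    ultimately show False using t0 by linarith
  qed
qed

lemma barbalat_B:
  fixes g f :: "real \<Rightarrow> real"
  assumes d: "\<And>t. t \<ge> T \<Longrightarrow> DERIV g t :> f t"
    and lim: "(g \<longlongrightarrow> 0) at_top"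
    and lip: "\<And>s t. s \<ge> T \<Longrightarrow> t \<ge> T \<Longrightarrow> \<bar>f s - f t\<bar> \<le> K * \<bar>s - t\<bar>"
  shows "(f \<longlongrightarrow> 0) at_top"
proof (rule tendstoI)
  fix \<epsilon> :: real assume e: "\<epsilon> > 0"
  define K' where "K' = \<bar>K\<bar> + 1"
  have K': "K' > 0" "K \<le> K'" unfolding K'_def by auto
  define \<delta> where "\<delta> = \<epsilon> / (2 * K')"
  have dpos: "\<delta> > 0" using e K' by (simp add: \<delta>_def)
  have "eventually (\<lambda>t. dist (g t) 0 < \<epsilon> * \<delta> / 4) at_top"
    using tendstoD[OF lim, of "\<epsilon> * \<delta> / 4"] e dpos by simp
  then obtain N where N: "\<And>t. t \<ge> N \<Longrightarrow> \<bar>g t\<bar> < \<epsilon> * \<delta> / 4"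
    unfolding eventually_at_top_linorder by auto
  show "eventually (\<lambda>t. dist (f t) 0 < \<epsilon>) at_top"
    unfolding eventually_at_top_linorder
  proof (rule exI[of _ "max N T"], intro allI impI, rule ccontr)
    fix t assume tt: "t \<ge> max N T" and nf: "\<not> dist (f t) 0 < \<epsilon>"
    have tT: "t \<ge> T" using tt by simp
    have ft: "\<bar>f t\<bar> \<ge> \<epsilon>" using nf by simp
    have dd: "\<And>u. t \<le> u \<Longrightarrow> u \<le> t+\<delta> \<Longrightarrow> DERIV g u :> f u" using d tT by auto
    have lt: "t < t + \<delta>" using dpos by simp
    obtain z where z: "t < z" "z < t + \<delta>" "g (t + \<delta>) - g t = (t + \<delta> - t) * f z"
      using MVT2[OF lt dd] by blast
    have "\<bar>f z - f t\<bar> \<le> K * \<bar>z - t\<bar>" using lip[of z t] z tT by auto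
    also have "\<dots> \<le> K' * \<delta>" using z K' by (intro mult_mono) auto
    also have "\<dots> = \<epsilon>/2" using K' by (simp add: \<delta>_def)
    finally have fz: "\<bar>f z\<bar> \<ge> \<epsilon>/2" using ft by linarith
    have "\<delta> * (\<epsilon>/2) \<le> \<delta> * \<bar>f z\<bar>" using dpos fz by (intro mult_left_mono) auto
    hence "\<bar>g (t + \<delta>) - g t\<bar> \<ge> \<epsilon> * \<delta> / 2" using z dpos by (simp add: abs_mult)
    moreover have "\<bar>g (t+\<delta>)\<bar> < \<epsilon> * \<delta> / 4" "\<bar>g t\<bar> < \<epsilon> * \<delta> / 4" using N tt dpos by auto
    ultimately show False by linarith
  qed
qed




lemma powr_diff_bound_upper:
  fixes k M x y :: real
  assumes k: "k \<ge> 1" and x: "0 < x" "x \<le> M" and y: "0 < y" "y \<le> M"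
  shows "\<bar>x powr k - y powr k\<bar> \<le> k * M powr (k - 1) * \<bar>x - y\<bar>"
proof -
  have *: "\<bar>b powr k - a powr k\<bar> \<le> k * M powr (k - 1) * \<bar>b - a\<bar>" if "0 < a" "a < b" "b \<le> M" for a b
  proof -
    have "\<And>z. a \<le> z \<Longrightarrow> z \<le> b \<Longrightarrow> DERIV (\<lambda>x. x powr k) z :> k * z powr (k - 1)"
      using that by (intro has_real_derivative_powr) auto
    from MVT2[OF \<open>a<b\<close> this] obtain z where z: "a < z" "z < b" "b powr k - a powr k = (b - a) * (k * z powr (k - 1))"
      by blast
    have "z powr (k-1) \<le> M powr (k-1)" using z that k by (intro powr_mono2) auto
    hence le: "k * z powr (k-1) \<le> k * M powr (k-1)" using k by simp
    have nn: "k * z powr (k-1) \<ge> 0" using k by simp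
    have ab: "\<bar>b - a\<bar> = b - a" using that by simp
    have "\<bar>b powr k - a powr k\<bar> = (b - a) * (k * z powr (k - 1))"
      unfolding z(3) using nn that by (intro abs_of_nonneg) simp
    also have "\<dots> \<le> (b - a) * (k * M powr (k - 1))"
      by (rule mult_left_mono[OF le]) (use that in simp)
    finally show ?thesis unfolding ab by (simp add: mult.commute)
  qed
  consider "x < y" | "x = y" | "y < x" by linarith
  then show ?thesis
  proof cases
    case 1 then show ?thesis using *[of x y] x y by (simp add: abs_minus_commute)
  next
    case 2 then show ?thesis by simp
  next
    case 3 then show ?thesis using *[of y x] x y by (simp add: abs_minus_commute)
  qed
qed

lemma powr_diff_bound_lower:
  fixes k m x y :: real
  assumes k: "k \<ge> 1" and m: "m > 0" and x: "m \<le> x" and y: "m \<le> y"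
  shows "k * m powr (k - 1) * \<bar>x - y\<bar> \<le> \<bar>x powr k - y powr k\<bar>"
proof -
  have *: "k * m powr (k - 1) * \<bar>b - a\<bar> \<le> \<bar>b powr k - a powr k\<bar>" if "m \<le> a" "a < b" for a b
  proof -
    have "\<And>z. a \<le> z \<Longrightarrow> z \<le> b \<Longrightarrow> DERIV (\<lambda>x. x powr k) z :> k * z powr (k - 1)"
      using that m by (intro has_real_derivative_powr) auto
    from MVT2[OF \<open>a<b\<close> this] obtain z where z: "a < z" "z < b" "b powr k - a powr k = (b - a) * (k * z powr (k - 1))"
      by blast
    have "m powr (k-1) \<le> z powr (k-1)" using z that k m by (intro powr_mono2) auto
    hence le: "k * m powr (k-1) \<le> k * z powr (k-1)" using k by simp
    have nn: "k * z powr (k-1) \<ge> 0" using k by simp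
    have ab: "\<bar>b - a\<bar> = b - a" using that by simp
    have "\<bar>b powr k - a powr k\<bar> = (b - a) * (k * z powr (k - 1))"
      unfolding z(3) using nn that by (intro abs_of_nonneg) simp
    moreover have "(b - a) * (k * m powr (k - 1)) \<le> (b - a) * (k * z powr (k - 1))"
      by (rule mult_left_mono[OF le]) (use that in simp)
    ultimately show ?thesis unfolding ab by (simp add: mult.commute)
  qed
  consider "x < y" | "x = y" | "y < x" by linarith
  then show ?thesis
  proof cases
    case 1 then show ?thesis using *[of x y] x y by (simp add: abs_minus_commute)
  next
    case 2 then show ?thesis by simp
  next
    case 3 then show ?thesis using *[of y x] x y by (simp add: abs_minus_commute)
  qed
qed

lemma exp_ge_2x: "x \<ge> 0 \<Longrightarrow> exp x \<ge> 2 * (x::real)"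
proof -
  assume "x \<ge> 0"
  have "exp (x/2) \<ge> 1 + x/2" by (rule exp_ge_add_one_self)
  hence "exp (x/2) * exp (x/2) \<ge> (1 + x/2) * (1 + x/2)"
    using \<open>x\<ge>0\<close> by (intro mult_mono) auto
  also have "exp (x/2) * exp (x/2) = exp x" by (simp flip: exp_add)
  finally have "exp x \<ge> (1 + x/2) * (1 + x/2)" .
  moreover have "(1 + x/2) * (1 + x/2) - 2 * x = (1 - x/2) * (1 - x/2)" by (simp add: algebra_simps)
  moreover have "(1 - x/2) * (1 - x/2) \<ge> 0" by simp
  ultimately show ?thesis by linarith
qed




lemma two_ab_le: "2 * \<bar>x\<bar> * \<bar>y\<bar> \<le> x^2 + (y::real)^2"
proof -
  have "0 \<le> (\<bar>x\<bar> - \<bar>y\<bar>)^2" by simp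
  thus ?thesis by (simp add: power2_eq_square algebra_simps)
qed

lemma abs_exp_sub_one: "\<bar>exp z - 1\<bar> \<le> exp \<bar>z\<bar> * \<bar>z::real\<bar>"
proof (cases "z \<ge> 0")
  case True
  have "exp (-z) \<ge> 1 + (-z)" by (rule exp_ge_add_one_self)
  hence "exp z * exp (-z) \<ge> exp z * (1 - z)" by (intro mult_left_mono) auto
  hence "1 \<ge> exp z - z * exp z" by (simp add: exp_minus algebra_simps)
  moreover have "exp z \<ge> 1" using True by simp
  ultimately show ?thesis using True by (simp add: algebra_simps)
next
  case False
  have "exp z \<ge> 1 + z" by (rule exp_ge_add_one_self)
  moreover have "exp z \<le> 1" using False by simp
  moreover have "exp \<bar>z\<bar> \<ge> 1" by simp
  moreover have "\<bar>z\<bar> \<le> exp \<bar>z\<bar> * \<bar>z\<bar>"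
    using mult_right_mono[OF \<open>exp \<bar>z\<bar> \<ge> 1\<close> abs_ge_zero[of z]] by simp
  ultimately show ?thesis using False
    by (smt (verit))
qed

locale sys =
  fixes a C \<theta> k :: real and Z v u :: "real \<Rightarrow> real"
  assumes apos: "a > 0" and thpos: "\<theta> > 0" and k1: "k \<ge> 1"
    and Cdef: "C = \<theta> powr k * a"
    and dZ: "\<And>t. (Z has_real_derivative (\<theta> - u t)) (at t)"
    and dv: "\<And>t. (v has_real_derivative (- a * v t - C * (exp (Z t) - 1))) (at t)"
    and upos: "\<And>t. u t > 0"
    and vu: "\<And>t. v t = \<theta> powr k - u t powr k"
begin

definition vd where "vd t = - a * v t - C * (exp (Z t) - 1)"

lemma Cpos: "C > 0" using apos thpos by (simp add: Cdef)

lemma u_eq: "u t = (\<theta> powr k - v t) powr (1/k)"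
  using upos[of t] k1 by (simp add: vu powr_powr)

lemma du: "(u has_real_derivative (- (1/k) * u t powr (1 - k) * vd t)) (at t)"
proof -
  have pos: "\<theta> powr k - v t > 0" using upos[of t] by (simp add: vu)
  have "((\<lambda>t. \<theta> powr k - v t) has_real_derivative (- vd t)) (at t)"
    using dv[of t] unfolding vd_def by (auto intro!: derivative_eq_intros)
  from DERIV_fun_powr[OF this pos, of "1/k"]
  have "((\<lambda>t. (\<theta> powr k - v t) powr (1/k)) has_real_derivative
          1/k * (\<theta> powr k - v t) powr (1/k - 1) * (- vd t)) (at t)" by simp
  moreover have "(\<theta> powr k - v t) powr (1/k - 1) = u t powr (1 - k)"
    using upos[of t] k1 by (simp add: vu powr_powr algebra_simps)
  moreover have "(\<lambda>t. (\<theta> powr k - v t) powr (1/k)) = u" using u_eq by (simp add: fun_eq_iff)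
  ultimately show ?thesis by (simp add: algebra_simps)
qed

lemma u_cont: "isCont u t"
  using du by (rule DERIV_isCont)

lemma Z_cont: "isCont Z t"
  using dZ by (rule DERIV_isCont)

lemma v_cont: "isCont v t"
  using dv by (rule DERIV_isCont)

definition Gu where "Gu x = k/(k+1) * x powr (k+1) - \<theta> * x powr k + \<theta> powr (k+1)/(k+1)"

lemma dGu: assumes x: "x > 0" shows "(Gu has_real_derivative (k * x powr k - \<theta> * k * x powr (k-1))) (at x)"
proof -
  have kp: "k > 0" "k + 1 > 0" using k1 by auto
  have d1: "((\<lambda>x. x powr (k+1)) has_real_derivative (k+1) * x powr k) (at x)"
    using has_real_derivative_powr[OF x, of "k+1"] by simp
  have d2: "((\<lambda>x. x powr k) has_real_derivative k * x powr (k-1)) (at x)"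
    using has_real_derivative_powr[OF x, of "k"] by simp
  have "(Gu has_real_derivative (k/(k+1) * ((k+1) * x powr k) - \<theta> * (k * x powr (k-1)) + 0)) (at x)"
    unfolding Gu_def by (intro DERIV_add DERIV_diff DERIV_cmult d1 d2 DERIV_const)
  moreover have "k/(k+1) * ((k+1) * x powr k) = k * x powr k" using kp by simp
  ultimately show ?thesis by (simp add: algebra_simps)
qed

definition E where "E t = C * (exp (Z t) - 1 - Z t) + Gu (u t)"

lemma dE: "(E has_real_derivative (- a * (\<theta> - u t) * v t)) (at t)"
proof -
  have x: "u t > 0" using upos by simp
  have h1: "u t powr k * u t powr (1-k) = u t" using x by (simp add: powr_add[symmetric])
  have h2: "u t powr (k-1) * u t powr (1-k) = 1" using x by (simp add: powr_add[symmetric])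
  have "((\<lambda>t. Gu (u t)) has_real_derivative
     (k * u t powr k - \<theta> * k * u t powr (k-1)) * (- (1/k) * u t powr (1 - k) * vd t)) (at t)"
    by (rule DERIV_chain2[OF dGu[OF x] du])
  moreover have eq: "(k * u t powr k - \<theta> * k * u t powr (k-1)) * (- (1/k) * u t powr (1 - k) * vd t)
      = (\<theta> - u t) * vd t"
  proof -
    have "(k * u t powr k - \<theta> * k * u t powr (k-1)) * (- (1/k) * u t powr (1 - k) * vd t)
      = - (u t powr k * u t powr (1-k)) * vd t + \<theta> * (u t powr (k-1) * u t powr (1-k)) * vd t"
      using k1 by (simp add: field_simps)
    also have "\<dots> = (\<theta> - u t) * vd t" unfolding h1 h2 by (simp add: algebra_simps)
    finally show ?thesis .
  qed
  ultimately have g: "((\<lambda>t. Gu (u t)) has_real_derivative (\<theta> - u t) * vd t) (at t)"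
    by simp
  have "(E has_real_derivative C * (exp (Z t) * (\<theta> - u t) - (\<theta> - u t)) + (\<theta> - u t) * vd t) (at t)"
    unfolding E_def by (rule derivative_eq_intros dZ g refl | simp)+
  moreover have "C * (exp (Z t) * (\<theta> - u t) - (\<theta> - u t)) + (\<theta> - u t) * vd t = - a * (\<theta> - u t) * v t"
    by (simp add: vd_def algebra_simps)
  ultimately show ?thesis by simp
qed

lemma yv_nonneg: "(\<theta> - u t) * v t \<ge> 0"
proof -
  consider "u t < \<theta>" | "u t = \<theta>" | "u t > \<theta>" by linarith
  then show ?thesis
  proof cases
    case 1
    have "u t powr k < \<theta> powr k" using 1 upos[of t] k1 by (intro powr_less_mono2) auto
    then show ?thesis using 1 by (simp add: vu)
  next
    case 2 then show ?thesis by simp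
  next
    case 3
    have "u t powr k > \<theta> powr k" using 3 thpos k1 by (intro powr_less_mono2) auto
    then show ?thesis using 3 by (simp add: vu mult_nonpos_nonpos)
  qed
qed

lemma E_antimono: assumes "t \<le> s" shows "E s \<le> E t"
proof (rule DERIV_nonpos_imp_nonincreasing[OF assms])
  fix x
  have "a * ((\<theta> - u x) * v x) \<ge> 0" using apos yv_nonneg[of x] by simp
  hence "- a * (\<theta> - u x) * v x \<le> 0" by (simp add: algebra_simps)
  then show "\<exists>y. DERIV E x :> y \<and> y \<le> 0" using dE by blast
qed

definition U0 where "U0 = (k+1)*(\<theta>+1)/k"
definition K0 where "K0 = \<theta> * U0 powr k"

lemma Gu_big: assumes "x \<ge> U0" shows "Gu x \<ge> x"
proof -
  have U0: "U0 \<ge> 1" using k1 thpos unfolding U0_def by (simp add: field_simps)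
  have x: "x \<ge> 1" using assms U0 by simp
  have "k/(k+1) * x \<ge> k/(k+1) * U0" using assms k1 by (intro mult_left_mono) auto
  also have "k/(k+1) * U0 = \<theta> + 1"
  proof -
    have "k \<noteq> 0" "k + 1 \<noteq> 0" using k1 by auto
    then show ?thesis unfolding U0_def by simp
  qed
  finally have l: "k/(k+1) * x - \<theta> \<ge> 1" by simp
  have "x powr (k+1) = x powr k * x" using x by (simp add: powr_add)
  hence eq: "Gu x = x powr k * (k/(k+1) * x - \<theta>) + \<theta> powr (k+1)/(k+1)"
    unfolding Gu_def by (simp add: algebra_simps)
  have A1: "x powr k * (k/(k+1) * x - \<theta>) \<ge> x powr k * 1"
    by (rule mult_left_mono[OF l]) simp
  have A2: "x powr k \<ge> x" using powr_mono[of 1 k x] x k1 by simp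
  have A: "x powr k * (k/(k+1) * x - \<theta>) \<ge> x" using A1 A2 by simp
  have Q: "\<theta> powr (k+1)/(k+1) \<ge> 0" using k1 by simp
  show ?thesis unfolding eq by (rule add_increasing2[OF Q A])
qed

lemma Gu_lb: assumes "x > 0" shows "Gu x \<ge> - K0"
proof (cases "x \<ge> U0")
  case True
  have "K0 \<ge> 0" unfolding K0_def using thpos by simp
  then show ?thesis using Gu_big[OF True] assms by simp
next
  case False
  have "x powr k \<le> U0 powr k" using False assms k1 by (intro powr_mono2) auto
  hence "\<theta> * x powr k \<le> K0" unfolding K0_def using thpos by simp
  moreover have "k/(k+1) * x powr (k+1) \<ge> 0" using k1 by simp
  moreover have "\<theta> powr (k+1)/(k+1) \<ge> 0" using k1 by simp
  ultimately show ?thesis unfolding Gu_def by linarith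
qed

lemma F_ge: "exp z - 1 - (z::real) \<ge> \<bar>z\<bar> - 1"
proof (cases "z \<ge> 0")
  case True then show ?thesis using exp_ge_2x[of z] by simp
next
  case False then show ?thesis using exp_ge_add_one_self[of z] by simp
qed

lemma E_lb: "E t \<ge> - K0"
proof -
  have "exp (Z t) - 1 - Z t \<ge> 0" using exp_ge_add_one_self[of "Z t"] by linarith
  hence "C * (exp (Z t) - 1 - Z t) \<ge> 0" using Cpos by simp
  thus ?thesis unfolding E_def using Gu_lb[OF upos[of t]] by simp
qed

end



context sys begin

lemma bounded_after:
  "\<exists>MZ MU MV MD. MZ \<ge> 0 \<and> MU > 0 \<and> MV \<ge> 0 \<and> MD \<ge> 0 \<and>
     (\<forall>t\<ge>T. \<bar>Z t\<bar> \<le> MZ \<and> u t \<le> MU \<and> \<bar>v t\<bar> \<le> MV \<and> \<bar>vd t\<bar> \<le> MD)"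
proof -
  have U0pos: "U0 > 0" unfolding U0_def using k1 thpos by simp
  define MZ where "MZ = (E T + K0)/C + 1"
  define MU where "MU = max U0 (E T)"
  define MV where "MV = \<theta> powr k + MU powr k"
  define MD where "MD = a*MV + C*(exp MZ + 1)"
  have MZ: "MZ \<ge> 0" unfolding MZ_def using E_lb[of T] Cpos by simp
  have MU: "MU > 0" unfolding MU_def using U0pos by simp
  have MV: "MV \<ge> 0" unfolding MV_def by simp
  have MD: "MD \<ge> 0" unfolding MD_def using MV apos Cpos by (simp add: add_nonneg_nonneg)
  have main: "\<bar>Z t\<bar> \<le> MZ \<and> u t \<le> MU \<and> \<bar>v t\<bar> \<le> MV \<and> \<bar>vd t\<bar> \<le> MD" if t: "t \<ge> T" for t
  proof -
    have Et: "E t \<le> E T" using E_antimono t by simp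
    have Fnn: "exp (Z t) - 1 - Z t \<ge> 0" using exp_ge_add_one_self[of "Z t"] by linarith
    have "C * (exp (Z t) - 1 - Z t) \<le> E T + K0"
      using Et Gu_lb[OF upos[of t]] unfolding E_def by linarith
    hence "exp (Z t) - 1 - Z t \<le> (E T + K0)/C" using Cpos by (simp add: field_simps)
    hence Zb: "\<bar>Z t\<bar> \<le> MZ" using F_ge[of "Z t"] unfolding MZ_def by linarith
    have "Gu (u t) \<le> E T" using Et Fnn Cpos unfolding E_def
      by (smt (verit) mult_nonneg_nonneg)
    hence ub: "u t \<le> MU" using Gu_big[of "u t"] unfolding MU_def by (cases "u t \<ge> U0") auto
    have "u t powr k \<le> MU powr k" using ub upos[of t] k1 by (intro powr_mono2) auto
    moreover have "0 \<le> u t powr k" "0 \<le> \<theta> powr k" "0 \<le> MU powr k" by simp_all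
    ultimately have vb: "\<bar>v t\<bar> \<le> MV" unfolding MV_def vu abs_le_iff by linarith
    have "exp (Z t) \<le> exp MZ" using Zb by (simp add: abs_le_iff)
    moreover have "exp (Z t) > 0" by simp
    ultimately have "\<bar>exp (Z t) - 1\<bar> \<le> exp MZ + 1" unfolding abs_le_iff by linarith
    hence "C * \<bar>exp (Z t) - 1\<bar> \<le> C * (exp MZ + 1)" using Cpos by simp
    moreover have "a * \<bar>v t\<bar> \<le> a * MV" using vb apos by simp
    moreover have "\<bar>vd t\<bar> \<le> a * \<bar>v t\<bar> + C * \<bar>exp (Z t) - 1\<bar>"
    proof -
      have "\<bar>vd t\<bar> \<le> \<bar>- a * v t\<bar> + \<bar>C * (exp (Z t) - 1)\<bar>"
        unfolding vd_def by (rule abs_triangle_ineq4)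
      also have "\<bar>- a * v t\<bar> = a * \<bar>v t\<bar>" using apos by (simp add: abs_mult)
      also have "\<bar>C * (exp (Z t) - 1)\<bar> = C * \<bar>exp (Z t) - 1\<bar>" using Cpos by (simp add: abs_mult)
      finally show ?thesis .
    qed
    ultimately have "\<bar>vd t\<bar> \<le> MD" unfolding MD_def by linarith
    with Zb ub vb show ?thesis by simp
  qed
  show ?thesis using MZ MU MV MD main by blast
qed

lemma dvd: "(vd has_real_derivative (- a * vd t - C * exp (Z t) * (\<theta> - u t))) (at t)"
proof -
  have "(vd has_real_derivative (- a * (- a * v t - C * (exp (Z t) - 1)) - C * (exp (Z t) * (\<theta> - u t)))) (at t)"
    unfolding vd_def[abs_def] by (rule derivative_eq_intros dv dZ refl | simp)+
  then show ?thesis by (simp add: vd_def algebra_simps)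
qed

lemma v_lim: "(v \<longlongrightarrow> 0) at_top"
proof -
  obtain MZ MU MV MD where M: "MZ \<ge> 0" "MU > 0" "MV \<ge> 0" "MD \<ge> 0"
    and B: "\<And>t. t \<ge> 0 \<Longrightarrow> \<bar>Z t\<bar> \<le> MZ \<and> u t \<le> MU \<and> \<bar>v t\<bar> \<le> MV \<and> \<bar>vd t\<bar> \<le> MD"
    using bounded_after[of 0] by blast
  define M where "M = max \<theta> MU"
  define L where "L = k * M powr (k-1) + 1"
  have Lpos: "L > 0" unfolding L_def using k1 by (simp add: add_nonneg_pos)
  have vy: "(v t)^2 \<le> L * ((\<theta> - u t) * v t)" if t: "t \<ge> 0" for t
  proof -
    have "\<bar>\<theta> powr k - u t powr k\<bar> \<le> k * M powr (k - 1) * \<bar>\<theta> - u t\<bar>"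
      using B[OF t] thpos upos[of t] k1 unfolding M_def by (intro powr_diff_bound_upper) auto
    also have "\<dots> \<le> L * \<bar>\<theta> - u t\<bar>" unfolding L_def by (simp add: distrib_right)
    finally have vb: "\<bar>v t\<bar> \<le> L * \<bar>\<theta> - u t\<bar>" by (simp add: vu)
    have "(v t)^2 = \<bar>v t\<bar> * \<bar>v t\<bar>" by (simp add: power2_eq_square)
    also have "\<dots> \<le> (L * \<bar>\<theta> - u t\<bar>) * \<bar>v t\<bar>" using vb by (intro mult_right_mono) auto
    also have "\<dots> = L * \<bar>(\<theta> - u t) * v t\<bar>" by (simp add: abs_mult)
    also have "\<dots> = L * ((\<theta> - u t) * v t)" using yv_nonneg[of t] by simp
    finally show ?thesis .
  qed
  define f where "f t = a * (v t)^2 / L" for t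
  have df: "(f has_real_derivative a * (2 * v t * vd t) / L) (at t)" for t
    unfolding f_def[abs_def] using dv[of t] Lpos
    by (auto intro!: derivative_eq_intros simp: vd_def)
  have fb: "\<bar>a * (2 * v t * vd t) / L\<bar> \<le> a * (2 * MV * MD) / L" if "t \<ge> 0" for t
  proof -
    have "\<bar>v t\<bar> * \<bar>vd t\<bar> \<le> MV * MD" using B[OF that] M by (intro mult_mono) auto
    then show ?thesis using apos Lpos by (simp add: abs_mult divide_right_mono)
  qed
  have "(f \<longlongrightarrow> 0) at_top"
  proof (rule barbalat_A[where T=0 and g=E and g'="\<lambda>t. - a * (\<theta> - u t) * v t" and B="-K0"])
    show "DERIV E t :> - a * (\<theta> - u t) * v t" for t by (rule dE)
    show "- a * (\<theta> - u t) * v t \<le> - f t" if "t \<ge> 0" for t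
    proof -
      have "(v t)^2 / L \<le> (\<theta> - u t) * v t" using vy[OF that] Lpos by (simp add: field_simps)
      hence "a * ((v t)^2 / L) \<le> a * ((\<theta> - u t) * v t)" by (rule mult_left_mono) (use apos in simp)
      then show ?thesis unfolding f_def by simp
    qed
    show "f t \<ge> 0" for t unfolding f_def using apos Lpos by simp
    show "\<bar>f s - f t\<bar> \<le> (a * (2 * MV * MD) / L) * \<bar>s - t\<bar>" if "s \<ge> 0" "t \<ge> 0" for s t
      by (rule lip_from_deriv[where T=0, OF df fb that])
    show "E t \<ge> - K0" for t by (rule E_lb)
  qed
  hence "((\<lambda>t. (L / a) * f t) \<longlongrightarrow> (L/a) * 0) at_top" by (intro tendsto_mult) auto
  moreover have "(\<lambda>t. (L / a) * f t) = (\<lambda>t. (v t)^2)" using apos Lpos by (simp add: f_def fun_eq_iff)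
  ultimately have "((\<lambda>t. (v t)^2) \<longlongrightarrow> 0) at_top" by simp
  hence "((\<lambda>t. sqrt ((v t)^2)) \<longlongrightarrow> sqrt 0) at_top" by (rule tendsto_real_sqrt)
  hence "((\<lambda>t. \<bar>v t\<bar>) \<longlongrightarrow> 0) at_top" by simp
  then show ?thesis by (simp add: tendsto_rabs_zero_iff)
qed

lemma vd_lim: "(vd \<longlongrightarrow> 0) at_top"
proof -
  obtain MZ MU MV MD where M: "MZ \<ge> 0" "MU > 0" "MV \<ge> 0" "MD \<ge> 0"
    and B: "\<And>t. t \<ge> 0 \<Longrightarrow> \<bar>Z t\<bar> \<le> MZ \<and> u t \<le> MU \<and> \<bar>v t\<bar> \<le> MV \<and> \<bar>vd t\<bar> \<le> MD"
    using bounded_after[of 0] by blast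
  define K where "K = a * MD + C * exp MZ * (\<theta> + MU)"
  have fb: "\<bar>- a * vd t - C * exp (Z t) * (\<theta> - u t)\<bar> \<le> K" if t: "t \<ge> 0" for t
  proof -
    have "\<bar>\<theta> - u t\<bar> \<le> \<theta> + MU" using B[OF t] upos[of t] thpos by (simp add: abs_le_iff)
    moreover have "exp (Z t) \<le> exp MZ" using B[OF t] by (simp add: abs_le_iff)
    ultimately have "exp (Z t) * \<bar>\<theta> - u t\<bar> \<le> exp MZ * (\<theta> + MU)" by (intro mult_mono) auto
    hence "C * (exp (Z t) * \<bar>\<theta> - u t\<bar>) \<le> C * (exp MZ * (\<theta> + MU))" using Cpos by simp
    moreover have "a * \<bar>vd t\<bar> \<le> a * MD" using B[OF t] apos by simp
    moreover have "\<bar>- a * vd t - C * exp (Z t) * (\<theta> - u t)\<bar> \<le> a * \<bar>vd t\<bar> + C * (exp (Z t) * \<bar>\<theta> - u t\<bar>)"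
    proof -
      have "\<bar>- a * vd t - C * exp (Z t) * (\<theta> - u t)\<bar> \<le> \<bar>- a * vd t\<bar> + \<bar>C * exp (Z t) * (\<theta> - u t)\<bar>"
        by (rule abs_triangle_ineq4)
      also have "\<bar>- a * vd t\<bar> = a * \<bar>vd t\<bar>" using apos by (simp add: abs_mult)
      also have "\<bar>C * exp (Z t) * (\<theta> - u t)\<bar> = C * (exp (Z t) * \<bar>\<theta> - u t\<bar>)" using Cpos by (simp add: abs_mult)
      finally show ?thesis .
    qed
    ultimately show ?thesis unfolding K_def by linarith
  qed
  show ?thesis
  proof (rule barbalat_B[where T=0 and g=v and K=K])
    show "DERIV v t :> vd t" for t using dv unfolding vd_def by simp
    show "(v \<longlongrightarrow> 0) at_top" by (rule v_lim)
    show "\<bar>vd s - vd t\<bar> \<le> K * \<bar>s - t\<bar>" if "s \<ge> 0" "t \<ge> 0" for s t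
      by (rule lip_from_deriv[where T=0, OF dvd fb that])
  qed
qed

lemma Z_lim: "(Z \<longlongrightarrow> 0) at_top"
proof -
  have "((\<lambda>t. - (vd t + a * v t) / C + 1) \<longlongrightarrow> - (0 + a * 0) / C + 1) at_top"
    by (intro tendsto_intros vd_lim v_lim) (use Cpos in auto)
  moreover have "(\<lambda>t. - (vd t + a * v t) / C + 1) = (\<lambda>t. exp (Z t))"
    using Cpos by (simp add: fun_eq_iff vd_def field_simps)
  ultimately have "((\<lambda>t. exp (Z t)) \<longlongrightarrow> 1) at_top" by simp
  hence "((\<lambda>t. ln (exp (Z t))) \<longlongrightarrow> ln 1) at_top" by (intro tendsto_ln) auto
  then show ?thesis by simp
qed

lemma u_lim: "(u \<longlongrightarrow> \<theta>) at_top"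
proof -
  have "((\<lambda>t. (\<theta> powr k - v t) powr (1/k)) \<longlongrightarrow> (\<theta> powr k - 0) powr (1/k)) at_top"
    by (intro tendsto_intros v_lim) (use thpos in auto)
  moreover have "(\<theta> powr k - 0) powr (1/k) = \<theta>" using thpos k1 by (simp add: powr_powr)
  moreover have "u = (\<lambda>t. (\<theta> powr k - v t) powr (1/k))" using u_eq by (simp add: fun_eq_iff)
  ultimately show ?thesis by simp
qed

end



context sys begin

definition hu where "hu x = (if x = \<theta> then 1/(k * \<theta> powr (k-1)) else (\<theta> - x)/(\<theta> powr k - x powr k))"

lemma hu_cont: "isCont hu \<theta>"
proof -
  have d: "((\<lambda>x. x powr k) has_real_derivative k * \<theta> powr (k-1)) (at \<theta>)"
    using has_real_derivative_powr[OF thpos] by simp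
  hence q: "((\<lambda>x. (x powr k - \<theta> powr k)/(x - \<theta>)) \<longlongrightarrow> k*\<theta> powr (k-1)) (at \<theta>)"
    unfolding has_field_derivative_iff .
  have nz: "k*\<theta> powr (k-1) \<noteq> 0" using k1 thpos by simp
  have l: "((\<lambda>x. inverse ((x powr k - \<theta> powr k)/(x - \<theta>))) \<longlongrightarrow> inverse (k*\<theta> powr (k-1))) (at \<theta>)"
    by (rule tendsto_inverse[OF q nz])
  have "eventually (\<lambda>x. inverse ((x powr k - \<theta> powr k)/(x - \<theta>)) = hu x) (at \<theta>)"
    unfolding eventually_at_filter
  proof (rule always_eventually, intro allI impI)
    fix x :: real assume "x \<noteq> \<theta>"
    have "(\<theta> - x)/(\<theta> powr k - x powr k) = (x - \<theta>)/(x powr k - \<theta> powr k)"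
      using minus_divide_divide[of "x-\<theta>" "x powr k - \<theta> powr k"] by simp
    with \<open>x \<noteq> \<theta>\<close> show "inverse ((x powr k - \<theta> powr k)/(x - \<theta>)) = hu x"
      unfolding hu_def by (simp add: inverse_eq_divide)
  qed
  from Lim_transform_eventually[OF l this]
  have "(hu \<longlongrightarrow> inverse (k*\<theta> powr (k-1))) (at \<theta>)" .
  moreover have "hu \<theta> = inverse (k*\<theta> powr (k-1))" by (simp add: hu_def inverse_eq_divide)
  ultimately show ?thesis unfolding isCont_def by simp
qed

lemma y_hu: "\<theta> - u t = hu (u t) * v t"
proof (cases "u t = \<theta>")
  case True then show ?thesis by (simp add: vu)
next
  case False
  have "u t powr k \<noteq> \<theta> powr k"
  proof (cases "u t < \<theta>")
    case True
    have "u t powr k < \<theta> powr k" using True upos[of t] k1 by (intro powr_less_mono2) auto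
    then show ?thesis by simp
  next
    case F: False
    hence "\<theta> < u t" using False by simp
    hence "\<theta> powr k < u t powr k" using thpos k1 by (intro powr_less_mono2) auto
    then show ?thesis by simp
  qed
  then have "\<theta> powr k - u t powr k \<noteq> 0" by simp
  then show ?thesis using False by (simp add: hu_def vu)
qed

definition bz where "bz z = (if z = 0 then 1 else (exp z - 1)/(z::real))"

lemma bz_cont: "isCont bz 0"
proof -
  have "(exp has_real_derivative exp 0) (at 0)" by (rule DERIV_exp)
  hence q: "((\<lambda>x. (exp x - exp 0)/(x - 0)) \<longlongrightarrow> exp 0) (at (0::real))"
    unfolding has_field_derivative_iff .
  have "eventually (\<lambda>x. (exp x - exp 0)/(x - 0) = bz x) (at (0::real))"
    unfolding eventually_at_filter by (rule always_eventually) (simp add: bz_def)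
  from Lim_transform_eventually[OF q this] have "(bz \<longlongrightarrow> 1) (at 0)" by simp
  then show ?thesis unfolding isCont_def by (simp add: bz_def)
qed

lemma exp_bz: "exp z - 1 = bz z * z"
  by (simp add: bz_def)

lemma bdd_finite_real: "finite (S::real set) \<Longrightarrow> \<exists>M. \<forall>t\<in>S. t \<le> M"
  using bdd_above_finite[of S] by (auto simp: bdd_above_def)

theorem zeros_infinite:
  assumes disc: "a < 4 * \<theta> / k"
  shows "infinite {t. T < t \<and> Z t = 0}"
proof
  assume fin: "finite {t. T < t \<and> Z t = 0}"
  obtain M where M: "\<And>t. T < t \<Longrightarrow> Z t = 0 \<Longrightarrow> t \<le> M"
    using bdd_finite_real[OF fin] by blast
  define T1 where "T1 = max T M + 1"
  have nz: "Z t \<noteq> 0" if "t \<ge> T1" for t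
  proof
    assume z: "Z t = 0"
    have "T < t" "M < t" using that unfolding T1_def by auto
    with M[OF \<open>T < t\<close> z] show False by linarith
  qed
  define c0 where "c0 = 1/(k*\<theta> powr (k-1))"
  have kp: "k > 0" using k1 by simp
  have c0pos: "c0 > 0" unfolding c0_def using kp thpos by simp
  have thk: "\<theta> powr k = \<theta> * \<theta> powr (k-1)"
    using thpos powr_add[of \<theta> 1 "k-1"] by simp
  have c0C: "4 * c0 * C = 4 * a * \<theta> / k"
    unfolding c0_def Cdef thk using kp thpos by (simp add: field_simps)
  define Dsc where "Dsc = 4 * c0 * C - a^2"
  have aa: "a * a < a * (4 * \<theta> / k)" by (rule mult_strict_left_mono[OF disc apos])
  have "a * (4 * \<theta> / k) = 4 * a * \<theta> / k" by simp
  hence Dpos: "Dsc > 0" using aa unfolding Dsc_def c0C power2_eq_square by linarith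
  define \<eta> where "\<eta> = min (min (c0/4) (C/4)) (Dsc/(16*(c0+C)))"
  have etapos: "\<eta> > 0" unfolding \<eta>_def using c0pos Cpos Dpos by simp
  have em: "\<eta> \<le> min (c0/4) (C/4)" unfolding \<eta>_def by (rule min.cobounded1)
  have eta1: "\<eta> \<le> c0/4" "\<eta> \<le> C/4" "\<eta> \<le> Dsc/(16*(c0+C))"
    using order_trans[OF em min.cobounded1] order_trans[OF em min.cobounded2]
    unfolding \<eta>_def by (auto simp del: min_le_iff_disj)
  have "((\<lambda>t. hu (u t)) \<longlongrightarrow> hu \<theta>) at_top" by (rule isCont_tendsto_compose[OF hu_cont u_lim])
  moreover have "hu \<theta> = c0" unfolding hu_def c0_def by simp
  ultimately have "((\<lambda>t. hu (u t)) \<longlongrightarrow> c0) at_top" by (simp only:)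
  moreover have "c0 - \<eta> < c0" using etapos by simp
  ultimately have ev1: "eventually (\<lambda>t. hu (u t) > c0 - \<eta>) at_top"
    by (rule order_tendstoD(1))
  have "((\<lambda>t. bz (Z t)) \<longlongrightarrow> bz 0) at_top" by (rule isCont_tendsto_compose[OF bz_cont Z_lim])
  moreover have "bz 0 = 1" unfolding bz_def by simp
  ultimately have "((\<lambda>t. bz (Z t)) \<longlongrightarrow> 1) at_top" by (simp only:)
  hence "((\<lambda>t. C * bz (Z t)) \<longlongrightarrow> C * 1) at_top" by (rule tendsto_mult_left)
  moreover have "C - \<eta> < C * 1" using etapos by simp
  ultimately have ev2: "eventually (\<lambda>t. C * bz (Z t) > C - \<eta>) at_top"
    by (rule order_tendstoD(1))
  from eventually_conj[OF ev1 ev2] obtain T2 where T2: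
    "\<And>t. t \<ge> T2 \<Longrightarrow> hu (u t) > c0 - \<eta> \<and> C * bz (Z t) > C - \<eta>"
    unfolding eventually_at_top_linorder by blast
  define T3 where "T3 = max T1 T2"
  define r where "r t = v t / Z t" for t
  define r' where "r' t = (vd t * Z t - v t * (\<theta> - u t)) / (Z t * Z t)" for t
  have dr: "(r has_real_derivative r' t) (at t)" if "t \<ge> T3" for t
  proof -
    have "Z t \<noteq> 0" using nz that unfolding T3_def by simp
    moreover have "DERIV v t :> vd t" using dv unfolding vd_def by simp
    ultimately show ?thesis unfolding r_def[abs_def] r'_def
      by (intro DERIV_divide dZ) auto
  qed
  have r'b: "r' t \<le> - \<eta> * (1 + (r t)^2)" if t: "t \<ge> T3" for t
  proof -
    have Zt: "Z t \<noteq> 0" using nz t unfolding T3_def by simp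
    define H where "H = hu (u t)"
    define Bc where "Bc = C * bz (Z t)"
    define \<rho> where "\<rho> = r t"
    have H: "H > c0 - \<eta>" and Bc: "Bc > C - \<eta>" using T2[of t] t unfolding H_def Bc_def T3_def by auto
    have vdt: "vd t = - a * v t - Bc * Z t" unfolding vd_def Bc_def using exp_bz[of "Z t"] by simp
    have yt: "\<theta> - u t = H * v t" unfolding H_def by (rule y_hu)
    have req: "r' t = - (a * \<rho> + Bc + H * \<rho>^2)"
      unfolding r'_def \<rho>_def r_def vdt yt using Zt by (simp add: field_simps power2_eq_square)
    define A where "A = c0 - 2*\<eta>"
    define B where "B = C - 2*\<eta>"
    have Apos: "A > 0" unfolding A_def using eta1 c0pos by simp
    have "8 * \<eta> * (c0 + C) \<le> 8 * (Dsc/(16*(c0+C))) * (c0 + C)"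
      using eta1(3) c0pos Cpos by (intro mult_right_mono) auto
    also have "\<dots> = Dsc / 2" using c0pos Cpos by (simp add: field_simps)
    finally have e8: "8 * \<eta> * (c0 + C) \<le> Dsc / 2" .
    have "4 * A * B = 4 * c0 * C - 8 * \<eta> * (c0 + C) + 16 * \<eta>^2"
      unfolding A_def B_def by (simp add: algebra_simps power2_eq_square)
    moreover have "\<eta>^2 \<ge> 0" by simp
    moreover have "Dsc = 4 * c0 * C - a^2" by (rule Dsc_def)
    ultimately have AB: "4 * A * B - a^2 \<ge> 0" using e8 Dpos by linarith
    have sq: "4 * A * (A * \<rho>^2 + a * \<rho> + B) = (2*A*\<rho> + a)^2 + (4 * A * B - a^2)"
      by (simp add: algebra_simps power2_eq_square)
    have "(2*A*\<rho> + a)^2 \<ge> 0" by simp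
    hence "4 * A * (A * \<rho>^2 + a * \<rho> + B) \<ge> 0" unfolding sq using AB by linarith
    hence q: "A * \<rho>^2 + a * \<rho> + B \<ge> 0" using Apos by (simp add: zero_le_mult_iff)
    have "H * \<rho>^2 \<ge> (c0 - \<eta>) * \<rho>^2" using H by (intro mult_right_mono) auto
    have q': "(c0 - 2*\<eta>) * \<rho>^2 + a * \<rho> + (C - 2*\<eta>) \<ge> 0" using q unfolding A_def B_def .
    have e1: "(c0 - 2*\<eta>) * \<rho>^2 = c0 * \<rho>^2 - 2 * (\<eta> * \<rho>^2)" by (simp add: algebra_simps)
    have e2: "(c0 - \<eta>) * \<rho>^2 = c0 * \<rho>^2 - \<eta> * \<rho>^2" by (simp add: algebra_simps)
    have e3: "\<eta> * (1 + \<rho>^2) = \<eta> + \<eta> * \<rho>^2" by (simp add: algebra_simps)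
    have "a * \<rho> + Bc + H * \<rho>^2 \<ge> \<eta> * (1 + \<rho>^2)"
      using q' Bc e1 e2 e3 \<open>H * \<rho>^2 \<ge> (c0 - \<eta>) * \<rho>^2\<close> by linarith
    then show ?thesis using req unfolding \<rho>_def by simp
  qed
  define \<phi> where "\<phi> t = arctan (r t) + \<eta> * t" for t
  have der: "\<exists>y. DERIV \<phi> x :> y \<and> y \<le> 0" if x: "T3 \<le> x" "x \<le> T3 + 4/\<eta>" for x
  proof -
    have d1: "((\<lambda>x. arctan (r x)) has_real_derivative inverse (1 + (r x)^2) * r' x) (at x)"
      by (rule DERIV_chain2[OF DERIV_arctan dr[OF x(1)]])
    have d2: "((\<lambda>x. \<eta> * x) has_real_derivative \<eta>) (at x)"
      by (rule DERIV_cmult_Id)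
    have d: "(\<phi> has_real_derivative inverse (1 + (r x)^2) * r' x + \<eta>) (at x)"
      unfolding \<phi>_def[abs_def] by (rule DERIV_add[OF d1 d2])
    have pos: "1 + (r x)^2 > 0" by (simp add: add_pos_nonneg)
    have "inverse (1 + (r x)^2) * r' x \<le> inverse (1 + (r x)^2) * (- \<eta> * (1 + (r x)^2))"
      using r'b[OF x(1)] pos by (intro mult_left_mono) auto
    also have "\<dots> = - \<eta>" using pos by simp
    finally have "inverse (1 + (r x)^2) * r' x + \<eta> \<le> 0" by simp
    with d show "\<exists>y. DERIV \<phi> x :> y \<and> y \<le> 0" by blast
  qed
  have "T3 \<le> T3 + 4/\<eta>" using etapos by simp
  from DERIV_nonpos_imp_nonincreasing[OF this der] have "\<phi> (T3 + 4/\<eta>) \<le> \<phi> T3" .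
  moreover have "\<eta> * (T3 + 4/\<eta>) = \<eta> * T3 + 4" using etapos by (simp add: distrib_left)
  ultimately have "arctan (r (T3 + 4/\<eta>)) + 4 \<le> arctan (r T3)"
    unfolding \<phi>_def by linarith
  moreover have "- (pi/2) < arctan (r (T3 + 4/\<eta>))" "arctan (r T3) < pi/2"
    using arctan_bounded by auto
  ultimately show False using pi_less_4 by linarith
qed

end



context sys begin

lemma no_equilibrium_hit:
  assumes At: "A < t0" and ZA: "Z A \<noteq> 0" and Z0: "Z t0 = 0" and v0: "v t0 = 0"
  shows False
proof -
  define S where "S = {A..t0}"
  have cS: "compact S" "S \<noteq> {}" unfolding S_def using At by auto
  have cu: "continuous_on S u" using u_cont by (intro continuous_at_imp_continuous_on) auto
  have cZ: "continuous_on S (\<lambda>t. \<bar>Z t\<bar>)"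
    using Z_cont by (intro continuous_at_imp_continuous_on continuous_intros) auto
  obtain tm where tm: "tm \<in> S" "\<And>s. s \<in> S \<Longrightarrow> u tm \<le> u s"
    using continuous_attains_inf[OF cS cu] by blast
  obtain tM where tM: "tM \<in> S" "\<And>s. s \<in> S \<Longrightarrow> \<bar>Z s\<bar> \<le> \<bar>Z tM\<bar>"
    using continuous_attains_sup[OF cS cZ] by blast
  define m where "m = min (u tm) \<theta>"
  have mpos: "m > 0" unfolding m_def using upos thpos by simp
  define MZ where "MZ = \<bar>Z tM\<bar>"
  define c1 where "c1 = 1 / (k * m powr (k-1))"
  have kmpos: "k * m powr (k-1) > 0" using mpos k1 by simp
  have c1pos: "c1 > 0" unfolding c1_def using kmpos by simp
  have yb: "\<bar>\<theta> - u t\<bar> \<le> c1 * \<bar>v t\<bar>" if t: "t \<in> S" for t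
  proof -
    have "m \<le> u t" unfolding m_def using tm(2)[OF t] by simp
    moreover have "m \<le> \<theta>" unfolding m_def by simp
    ultimately have "k * m powr (k - 1) * \<bar>\<theta> - u t\<bar> \<le> \<bar>\<theta> powr k - u t powr k\<bar>"
      using k1 mpos by (intro powr_diff_bound_lower) auto
    hence "k * m powr (k - 1) * \<bar>\<theta> - u t\<bar> \<le> \<bar>v t\<bar>" by (simp add: vu)
    then show ?thesis unfolding c1_def using kmpos by (simp add: field_simps)
  qed
  define L where "L = c1 + 2 * a + C * exp MZ"
  define D where "D t = (Z t)^2 + (v t)^2" for t
  define D' where "D' t = 2 * Z t * (\<theta> - u t) + 2 * v t * vd t" for t
  have dD: "(D has_real_derivative D' t) (at t)" for t
  proof -
    have "DERIV v t :> vd t" using dv unfolding vd_def by simp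
    then show ?thesis unfolding D_def[abs_def] D'_def
      by (auto intro!: derivative_eq_intros dZ)
  qed
  have Dlow: "D' t + L * D t \<ge> 0" if t: "t \<in> S" for t
  proof -
    have Zb: "\<bar>Z t\<bar> \<le> MZ" unfolding MZ_def using tM(2)[OF t] .
    have ab: "2 * \<bar>Z t\<bar> * \<bar>v t\<bar> \<le> D t" unfolding D_def by (rule two_ab_le)
    have t1: "\<bar>2 * Z t * (\<theta> - u t)\<bar> \<le> c1 * D t"
    proof -
      have "\<bar>2 * Z t * (\<theta> - u t)\<bar> = 2 * \<bar>Z t\<bar> * \<bar>\<theta> - u t\<bar>" by (simp add: abs_mult)
      also have "\<dots> \<le> 2 * \<bar>Z t\<bar> * (c1 * \<bar>v t\<bar>)" using yb[OF t] by (intro mult_left_mono) auto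
      also have "\<dots> = c1 * (2 * \<bar>Z t\<bar> * \<bar>v t\<bar>)" by (simp add: algebra_simps)
      also have "\<dots> \<le> c1 * D t" using ab c1pos by (intro mult_left_mono) auto
      finally show ?thesis .
    qed
    have ee: "\<bar>exp (Z t) - 1\<bar> \<le> exp MZ * \<bar>Z t\<bar>"
    proof -
      have "\<bar>exp (Z t) - 1\<bar> \<le> exp \<bar>Z t\<bar> * \<bar>Z t\<bar>" by (rule abs_exp_sub_one)
      also have "\<dots> \<le> exp MZ * \<bar>Z t\<bar>" using Zb by (intro mult_right_mono) auto
      finally show ?thesis .
    qed
    have t2: "\<bar>2 * v t * (C * (exp (Z t) - 1))\<bar> \<le> C * exp MZ * D t"
    proof -
      have "\<bar>2 * v t * (C * (exp (Z t) - 1))\<bar> = C * (2 * \<bar>v t\<bar> * \<bar>exp (Z t) - 1\<bar>)"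
        using Cpos by (simp add: abs_mult)
      also have "\<dots> \<le> C * (2 * \<bar>v t\<bar> * (exp MZ * \<bar>Z t\<bar>))"
        using ee Cpos by (intro mult_left_mono) auto
      also have "\<dots> = C * exp MZ * (2 * \<bar>Z t\<bar> * \<bar>v t\<bar>)" by (simp add: algebra_simps)
      also have "\<dots> \<le> C * exp MZ * D t" using ab Cpos by (intro mult_left_mono) auto
      finally show ?thesis .
    qed
    have vv: "(v t)^2 \<le> D t" unfolding D_def by simp
    have e: "D' t = 2 * Z t * (\<theta> - u t) - 2 * a * (v t)^2 - 2 * v t * (C * (exp (Z t) - 1))"
      unfolding D'_def vd_def by (simp add: algebra_simps power2_eq_square)
    have "2 * a * (v t)^2 \<le> 2 * a * D t" using vv apos by simp
    moreover have "L * D t = c1 * D t + 2 * a * D t + C * exp MZ * D t"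
      unfolding L_def by (simp add: algebra_simps)
    ultimately show ?thesis using e t1 t2 by (simp only: abs_le_iff) linarith
  qed
  define G where "G t = D t * exp (L * t)" for t
  have der: "\<exists>y. DERIV G x :> y \<and> y \<ge> 0" if x: "A \<le> x" "x \<le> t0" for x
  proof -
    have "(G has_real_derivative D' x * exp (L * x) + D x * (exp (L * x) * L)) (at x)"
      unfolding G_def[abs_def] by (auto intro!: derivative_eq_intros dD)
    moreover have "D' x * exp (L * x) + D x * (exp (L * x) * L) = (D' x + L * D x) * exp (L * x)"
      by (simp add: algebra_simps)
    moreover have "(D' x + L * D x) * exp (L * x) \<ge> 0"
      using Dlow[of x] x unfolding S_def by simp
    ultimately show "\<exists>y. DERIV G x :> y \<and> y \<ge> 0" by auto
  qed
  have "A \<le> t0" using At by simp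
  from DERIV_nonneg_imp_nondecreasing[OF this der] have "G A \<le> G t0" .
  moreover have "G t0 = 0" unfolding G_def D_def using Z0 v0 by simp
  moreover have "G A > 0" unfolding G_def D_def using ZA by (simp add: add_pos_nonneg)
  ultimately show False by simp
qed

theorem zeros_finite:
  assumes neg: "\<And>t. t \<le> A \<Longrightarrow> Z t < 0"
  shows "finite {t. t \<le> B \<and> Z t = 0}"
proof (rule ccontr)
  define S where "S = {t. t \<le> B \<and> Z t = 0}"
  assume inf: "infinite {t. t \<le> B \<and> Z t = 0}"
  hence infS: "infinite S" unfolding S_def .
  have sub: "S \<subseteq> {A..B}"
  proof
    fix t assume "t \<in> S"
    hence "t \<le> B" "Z t = 0" unfolding S_def by auto
    moreover have "A \<le> t" using neg[of t] \<open>Z t = 0\<close> by force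
    ultimately show "t \<in> {A..B}" by simp
  qed
  obtain t0 where t0: "t0 \<in> {A..B}" "t0 islimpt S"
    using compact_Icc[of A B] infS sub unfolding compact_eq_Bolzano_Weierstrass by blast
  have cl: "closed {t \<in> UNIV. Z t = 0}"
    using Z_cont by (intro continuous_closed_preimage_constant continuous_at_imp_continuous_on) auto
  have "t0 islimpt {t \<in> UNIV. Z t = 0}"
    by (rule islimpt_subset[OF t0(2)]) (auto simp: S_def)
  hence Z0: "Z t0 = 0" using cl unfolding closed_limpt by blast
  have d: "(Z has_real_derivative (\<theta> - u t0)) (at t0 within S)"
    by (rule has_field_derivative_at_within[OF dZ])
  hence l1: "((\<lambda>y. (Z y - Z t0)/(y - t0)) \<longlongrightarrow> \<theta> - u t0) (at t0 within S)"
    unfolding has_field_derivative_iff .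
  have ev: "eventually (\<lambda>y. 0 = (Z y - Z t0)/(y - t0)) (at t0 within S)"
    unfolding eventually_at_filter
    by (rule always_eventually) (auto simp: S_def Z0)
  have l2: "((\<lambda>y. (Z y - Z t0)/(y - t0)) \<longlongrightarrow> 0) (at t0 within S)"
    by (rule Lim_transform_eventually[OF tendsto_const ev])
  have nb: "at t0 within S \<noteq> bot" using t0(2) trivial_limit_within by blast
  have "\<theta> - u t0 = 0" using tendsto_unique[OF nb l1 l2] .
  hence v0: "v t0 = 0" by (simp add: vu)
  have "A \<le> t0" using t0(1) by simp
  moreover have "t0 \<noteq> A" using neg[of A] Z0 by auto
  ultimately have At: "A < t0" by simp
  have "Z A \<noteq> 0" using neg[of A] by simp
  show False by (rule no_equilibrium_hit[OF At \<open>Z A \<noteq> 0\<close> Z0 v0])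
qed

end



lemma flux_neg:
  fixes \<alpha> \<beta> \<gamma> :: real and w w' :: "real \<Rightarrow> real"
  assumes al: "\<alpha> > 0" and be: "\<beta> \<ge> 0" and cw: "continuous_on {0..} w'"
    and hf: "\<And>r. r > 0 \<Longrightarrow> (flux \<alpha> \<beta> w' has_real_derivative - (r powr \<gamma> * exp (w r))) (at r)"
    and s: "s > 0"
  shows "flux \<alpha> \<beta> w' s < 0"
proof (rule ccontr)
  assume nn: "\<not> flux \<alpha> \<beta> w' s < 0"
  define f where "f = flux \<alpha> \<beta> w'"
  have cw1: "continuous_on {0..1} (\<lambda>r. \<bar>w' r\<bar>)"
    by (intro continuous_intros continuous_on_subset[OF cw]) auto
  obtain rm where rm: "rm \<in> {0..1}" "\<And>r. r \<in> {0..1} \<Longrightarrow> \<bar>w' r\<bar> \<le> \<bar>w' rm\<bar>"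
    using continuous_attains_sup[OF compact_Icc _ cw1] by fastforce
  define B1 where "B1 = \<bar>w' rm\<bar> + 1"
  have B1: "B1 > 0" unfolding B1_def by simp
  define K where "K = B1 powr \<beta> * B1"
  have Kpos: "K > 0" unfolding K_def using B1 by simp
  have fb: "\<bar>f r\<bar> \<le> r powr \<alpha> * K" if r: "0 < r" "r \<le> 1" for r
  proof -
    have wb: "\<bar>w' r\<bar> \<le> B1" using rm(2)[of r] r unfolding B1_def by simp
    have "\<bar>w' r\<bar> powr \<beta> \<le> B1 powr \<beta>" using wb be by (intro powr_mono2) auto
    hence "\<bar>w' r\<bar> powr \<beta> * \<bar>w' r\<bar> \<le> B1 powr \<beta> * B1" using wb by (intro mult_mono) auto
    hence "r powr \<alpha> * (\<bar>w' r\<bar> powr \<beta> * \<bar>w' r\<bar>) \<le> r powr \<alpha> * K" unfolding K_def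
      by (intro mult_left_mono) auto
    moreover have "\<bar>f r\<bar> = r powr \<alpha> * (\<bar>w' r\<bar> powr \<beta> * \<bar>w' r\<bar>)"
      unfolding f_def flux_def by (simp add: abs_mult)
    ultimately show ?thesis by simp
  qed
  have dec: "f y < f x" if "0 < x" "x < y" for x y
  proof (rule DERIV_neg_imp_decreasing[OF that(2)])
    fix z assume "x \<le> z" "z \<le> y"
    hence z: "z > 0" using that by simp
    have "z powr \<gamma> * exp (w z) > 0" using z by simp
    then show "\<exists>d. DERIV f z :> d \<and> d < 0" using hf[OF z] unfolding f_def by force
  qed
  define s2 where "s2 = min (s/2) 1"
  have s2: "0 < s2" "s2 < s" "s2 \<le> 1" unfolding s2_def using s by auto
  define \<epsilon> where "\<epsilon> = f s2"
  have epos: "\<epsilon> > 0" using dec[OF s2(1) s2(2)] nn unfolding \<epsilon>_def f_def by simp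
  define X where "X = (\<epsilon>/(2*K)) powr (1/\<alpha>)"
  have Xpos: "X > 0" unfolding X_def using epos Kpos by simp
  define r where "r = min (s2/2) X"
  have r: "0 < r" "r < s2" "r \<le> X" unfolding r_def using s2 Xpos by auto
  have "r powr \<alpha> \<le> X powr \<alpha>" using r al by (intro powr_mono2) auto
  also have "X powr \<alpha> = \<epsilon>/(2*K)" unfolding X_def using epos Kpos al by (simp add: powr_powr)
  finally have "r powr \<alpha> * K \<le> \<epsilon>/(2*K) * K" using Kpos by (intro mult_right_mono) auto
  hence "\<bar>f r\<bar> \<le> \<epsilon> / 2" using fb[of r] r s2 Kpos by simp
  moreover have "f r > \<epsilon>" using dec[OF r(1) r(2)] unfolding \<epsilon>_def .
  ultimately show False using epos by simp
qed

theorem theorem4p1: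
  fixes \<alpha> \<beta> \<gamma> \<theta> \<rho> :: real and w :: "real \<Rightarrow> real"
  assumes theta_def: "\<theta> = \<gamma> + 2 + \<beta> - \<alpha>"
    and "\<alpha> > \<beta> + 1" and "\<beta> \<ge> 0" and "\<theta> > 0"
    and "\<alpha> - \<beta> - 1 < 4 * \<theta> / (\<beta> + 1)"
    and sol: "is_solution \<alpha> \<beta> \<gamma> \<rho> w"
  shows "(\<forall>R>0. infinite {s. R < s \<and> w s = wstar \<alpha> \<beta> \<theta> s}
                 \<and> finite {s. 0 < s \<and> s \<le> R \<and> w s = wstar \<alpha> \<beta> \<theta> s})
         \<and> infinite {s. 0 < s \<and> w s = wstar \<alpha> \<beta> \<theta> s}"
proof -
  note ab = assms(2) and be = assms(3) and th = assms(4) and disc = assms(5)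
  from sol obtain w' where hw: "\<And>r. r \<ge> 0 \<Longrightarrow> (w has_real_derivative w' r) (at r within {0..})"
    and cw: "continuous_on {0..} w'"
    and hf: "\<And>r. r > 0 \<Longrightarrow> (flux \<alpha> \<beta> w' has_real_derivative - (r powr \<gamma> * exp (w r))) (at r)"
    unfolding is_solution_def by blast
  define a where "a = \<alpha> - \<beta> - 1"
  define k where "k = \<beta> + 1"
  define C where "C = \<theta> powr k * a"
  have apos: "a > 0" unfolding a_def using ab by simp
  have k1: "k \<ge> 1" unfolding k_def using be by simp
  have Cpos: "C > 0" unfolding C_def using apos th by simp
  have alpos: "\<alpha> > 0" using ab be by simp
  have hwat: "(w has_real_derivative w' r) (at r)" if "r > 0" for r
  proof -
    have "r \<in> interior {0..}" using that by simp
    from at_within_interior[OF this] hw[of r] that show ?thesis by simp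
  qed
  have fneg: "flux \<alpha> \<beta> w' r < 0" if "r > 0" for r
    by (rule flux_neg[OF alpos be cw hf that]) auto
  have w'neg: "w' r < 0" if r: "r > 0" for r
  proof (rule ccontr)
    assume "\<not> w' r < 0"
    hence "flux \<alpha> \<beta> w' r \<ge> 0" unfolding flux_def using r by simp
    with fneg[OF r] show False by simp
  qed
  define u where "u t = - (exp t * w' (exp t))" for t
  define v where "v t = \<theta> powr k - u t powr k" for t
  define Z where "Z t = w (exp t) - wstar \<alpha> \<beta> \<theta> (exp t)" for t
  have upos: "u t > 0" for t unfolding u_def using w'neg[of "exp t"] by (simp add: mult_pos_neg)
  have wst: "wstar \<alpha> \<beta> \<theta> (exp t) = ln C - \<theta> * t" for t
    unfolding wstar_def C_def a_def k_def by simp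
  have dZ: "(Z has_real_derivative (\<theta> - u t)) (at t)" for t
  proof -
    have "((\<lambda>t. w (exp t)) has_real_derivative w' (exp t) * exp t) (at t)"
      by (rule DERIV_chain2[OF hwat DERIV_exp]) simp
    hence "((\<lambda>t. w (exp t) - (ln C - \<theta> * t)) has_real_derivative w' (exp t) * exp t - (0 - \<theta> * 1)) (at t)"
      by (intro DERIV_diff DERIV_const DERIV_cmult DERIV_ident)
    moreover have "Z = (\<lambda>t. w (exp t) - (ln C - \<theta> * t))" unfolding Z_def[abs_def] wst by simp
    ultimately show ?thesis unfolding u_def by (simp add: algebra_simps)
  qed
  have vrep: "v t = \<theta> powr k + exp (- a * t) * flux \<alpha> \<beta> w' (exp t)" for t
  proof -
    define q where "q = - w' (exp t)"
    have q: "q > 0" unfolding q_def using w'neg[of "exp t"] by simp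
    have "u t powr k = (exp t * q) powr k" unfolding u_def q_def by simp
    also have "\<dots> = exp (k * t) * q powr k" using q
      by (simp add: powr_def ln_mult distrib_left exp_add)
    finally have uk: "u t powr k = exp (k * t) * q powr k" .
    have "flux \<alpha> \<beta> w' (exp t) = exp (\<alpha> * t) * (q powr \<beta> * (- q))"
    proof -
      have aw: "\<bar>w' (exp t)\<bar> = q" unfolding q_def using w'neg[of "exp t"] by simp
      have "w' (exp t) = - q" unfolding q_def by simp
      then show ?thesis unfolding flux_def aw by (simp add: powr_def)
    qed
    also have "q powr \<beta> * (- q) = - (q powr k)" unfolding k_def using q by (simp add: powr_add)
    finally have fl: "flux \<alpha> \<beta> w' (exp t) = - (exp (\<alpha> * t) * q powr k)" by simp
    have "exp (- a * t) * exp (\<alpha> * t) = exp (k * t)"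
      unfolding a_def k_def by (simp add: exp_add[symmetric] algebra_simps)
    hence "exp (- a * t) * flux \<alpha> \<beta> w' (exp t) = - (exp (k * t) * q powr k)"
      unfolding fl by (simp add: algebra_simps)
    then show ?thesis unfolding v_def uk by simp
  qed
  have dv: "(v has_real_derivative (- a * v t - C * (exp (Z t) - 1))) (at t)" for t
  proof -
    have d1: "((\<lambda>t. flux \<alpha> \<beta> w' (exp t)) has_real_derivative
              - (exp t powr \<gamma> * exp (w (exp t))) * exp t) (at t)"
      by (rule DERIV_chain2[OF hf DERIV_exp]) simp
    have d2: "((\<lambda>t. exp (- a * t)) has_real_derivative exp (- a * t) * (- a)) (at t)"
      by (auto intro!: derivative_eq_intros)
    have "((\<lambda>t. \<theta> powr k + exp (- a * t) * flux \<alpha> \<beta> w' (exp t)) has_real_derivative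
        0 + (exp (- a * t) * (- a) * flux \<alpha> \<beta> w' (exp t) + (- (exp t powr \<gamma> * exp (w (exp t))) * exp t) * exp (- a * t))) (at t)"
      by (rule DERIV_add[OF DERIV_const DERIV_mult[OF d2 d1]])
    moreover have "v = (\<lambda>t. \<theta> powr k + exp (- a * t) * flux \<alpha> \<beta> w' (exp t))"
      using vrep by (simp add: fun_eq_iff)
    moreover have "0 + (exp (- a * t) * (- a) * flux \<alpha> \<beta> w' (exp t) + (- (exp t powr \<gamma> * exp (w (exp t))) * exp t) * exp (- a * t))
        = - a * v t - C * (exp (Z t) - 1)"
    proof -
      have e1: "exp (- a * t) * flux \<alpha> \<beta> w' (exp t) = v t - \<theta> powr k" using vrep[of t] by simp
      have e2: "exp (- a * t) * (exp t powr \<gamma> * exp (w (exp t)) * exp t) = exp (w (exp t)) * exp (\<theta> * t)"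
      proof -
        have "exp t powr \<gamma> = exp (\<gamma> * t)" by (simp add: powr_def)
        moreover have "exp (- a * t) * exp (\<gamma> * t) * exp t = exp (\<theta> * t)"
          unfolding a_def theta_def by (simp add: exp_add[symmetric] algebra_simps)
        ultimately show ?thesis by (simp add: algebra_simps)
      qed
      have e3: "C * exp (Z t) = exp (w (exp t)) * exp (\<theta> * t)"
      proof -
        have "Z t = w (exp t) + \<theta> * t - ln C" unfolding Z_def wst by simp
        hence "exp (Z t) = exp (w (exp t)) * exp (\<theta> * t) / C"
          using Cpos by (simp add: exp_diff exp_add)
        then show ?thesis using Cpos by simp
      qed
      have "exp (- a * t) * (- a) * flux \<alpha> \<beta> w' (exp t) = - a * (exp (- a * t) * flux \<alpha> \<beta> w' (exp t))"
        by (simp add: algebra_simps)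
      hence "exp (- a * t) * (- a) * flux \<alpha> \<beta> w' (exp t) = - a * (v t - \<theta> powr k)"
        by (simp only: e1)
      moreover have "(- (exp t powr \<gamma> * exp (w (exp t))) * exp t) * exp (- a * t) = - (C * exp (Z t))"
        using e2 e3 by (simp add: algebra_simps)
      moreover have "a * \<theta> powr k = C" unfolding C_def by simp
      ultimately show ?thesis by (simp add: algebra_simps)
    qed
    ultimately show ?thesis by simp
  qed
  interpret S: sys a C \<theta> k Z v u
  proof
    show "a > 0" by (rule apos)
    show "\<theta> > 0" by (rule th)
    show "k \<ge> 1" by (rule k1)
    show "C = \<theta> powr k * a" by (rule C_def)
    show "(Z has_real_derivative \<theta> - u t) (at t)" for t by (rule dZ)
    show "(v has_real_derivative - a * v t - C * (exp (Z t) - 1)) (at t)" for t by (rule dv)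
    show "u t > 0" for t by (rule upos)
    show "v t = \<theta> powr k - u t powr k" for t by (rule v_def)
  qed
  have discr: "a < 4 * \<theta> / k" using disc unfolding a_def k_def .
  have cwc: "continuous_on {0..1} (\<lambda>s. \<bar>w s\<bar>)"
  proof -
    have "continuous_on {0..} w" by (rule DERIV_continuous_on[OF hw]) simp
    hence "continuous_on {0..1} w" by (rule continuous_on_subset) auto
    then show ?thesis by (rule continuous_on_rabs)
  qed
  obtain sm where sm: "sm \<in> {0..1}" "\<And>s. s \<in> {0..1} \<Longrightarrow> \<bar>w s\<bar> \<le> \<bar>w sm\<bar>"
    using continuous_attains_sup[OF compact_Icc _ cwc] by fastforce
  define A where "A = min 0 ((ln C - \<bar>w sm\<bar>) / \<theta> - 1)"
  have Zneg: "Z t < 0" if t: "t \<le> A" for t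
  proof -
    have "exp t \<le> 1" using t unfolding A_def by simp
    hence "\<bar>w (exp t)\<bar> \<le> \<bar>w sm\<bar>" using sm(2)[of "exp t"] by simp
    moreover have "\<theta> * t \<le> \<theta> * ((ln C - \<bar>w sm\<bar>) / \<theta> - 1)"
      using t th unfolding A_def by (intro mult_left_mono) auto
    moreover have "\<theta> * ((ln C - \<bar>w sm\<bar>) / \<theta> - 1) = ln C - \<bar>w sm\<bar> - \<theta>"
      using th by (simp add: field_simps)
    moreover have "Z t = w (exp t) + \<theta> * t - ln C" unfolding Z_def wst by simp
    ultimately show ?thesis using th by (simp add: abs_le_iff)
  qed
  have zeq: "w s = wstar \<alpha> \<beta> \<theta> s \<longleftrightarrow> Z (ln s) = 0" if "s > 0" for s
    unfolding Z_def using that by simp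
  have part1: "infinite {s. R < s \<and> w s = wstar \<alpha> \<beta> \<theta> s} \<and>
               finite {s. 0 < s \<and> s \<le> R \<and> w s = wstar \<alpha> \<beta> \<theta> s}" if R: "R > 0" for R
  proof
    have inf: "infinite {t. ln R < t \<and> Z t = 0}" by (rule S.zeros_infinite[OF discr])
    have "exp ` {t. ln R < t \<and> Z t = 0} \<subseteq> {s. R < s \<and> w s = wstar \<alpha> \<beta> \<theta> s}"
    proof
      fix s assume "s \<in> exp ` {t. ln R < t \<and> Z t = 0}"
      then obtain t where t: "s = exp t" "ln R < t" "Z t = 0" by auto
      have "exp (ln R) < exp t" using t(2) by simp
      hence "R < exp t" using R by simp
      moreover have "w (exp t) = wstar \<alpha> \<beta> \<theta> (exp t)" using t(3) unfolding Z_def by simp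
      ultimately show "s \<in> {s. R < s \<and> w s = wstar \<alpha> \<beta> \<theta> s}" using t(1) by simp
    qed
    moreover have "infinite (exp ` {t. ln R < t \<and> Z t = 0})"
    proof -
      have "inj_on exp {t. ln R < t \<and> Z t = 0}" by (simp add: inj_on_def)
      then show ?thesis using inf by (simp add: finite_image_iff)
    qed
    ultimately show "infinite {s. R < s \<and> w s = wstar \<alpha> \<beta> \<theta> s}" using finite_subset by blast
  next
    have fin: "finite {t. t \<le> ln R \<and> Z t = 0}" by (rule S.zeros_finite[OF Zneg])
    have "{s. 0 < s \<and> s \<le> R \<and> w s = wstar \<alpha> \<beta> \<theta> s} \<subseteq> exp ` {t. t \<le> ln R \<and> Z t = 0}"
    proof
      fix s assume "s \<in> {s. 0 < s \<and> s \<le> R \<and> w s = wstar \<alpha> \<beta> \<theta> s}"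
      hence s: "0 < s" "s \<le> R" "w s = wstar \<alpha> \<beta> \<theta> s" by auto
      have "ln s \<le> ln R" using s R by simp
      moreover have "Z (ln s) = 0" using zeq[OF s(1)] s(3) by simp
      moreover have "s = exp (ln s)" using s by simp
      ultimately show "s \<in> exp ` {t. t \<le> ln R \<and> Z t = 0}" by blast
    qed
    then show "finite {s. 0 < s \<and> s \<le> R \<and> w s = wstar \<alpha> \<beta> \<theta> s}"
      using finite_subset fin by blast
  qed
  have "{s. 1 < s \<and> w s = wstar \<alpha> \<beta> \<theta> s} \<subseteq> {s. 0 < s \<and> w s = wstar \<alpha> \<beta> \<theta> s}" by auto
  hence "infinite {s. 0 < s \<and> w s = wstar \<alpha> \<beta> \<theta> s}"
    using part1[of 1] finite_subset by auto
  with part1 show ?thesis by blast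
qed


end
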